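(* Let $X\sim\mathrm{ECR}(\beta,\lambda)$. Then $$\mathbb E(\log X)=\log\lambda+\tfrac12\,\Phi\!\left(\tfrac12;1,\beta\right)+\psi(1+\beta)+\gamma-\frac1\beta.$$
   Context: The exponentiated Cauchy–Rayleigh distribution $\mathrm{ECR}(\beta,\lambda)$, with shape parameter $\beta>0$ and scale parameter $\lambda>0$, is the distribution on $(0,\infty)$ with cdf $F(x)=\left(1-\frac{\lambda}{\sqrt{\lambda^2+x^2}}\right)^{\beta}$ for $x>0$. $\Phi(z;s,a)=\sum_{n=0}^\infty \frac{z^n}{(n+a)^s}$ is the Lerch transcendent, $\psi=\Gamma'/\Gamma$ is the digamma function, and $\gamma=0.57721\ldots$ is the Euler–Mascheroni constant. *)

theory Defs
  imports "HOL-Probability.Probability"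
begin

text \<open>CDF of the exponentiated Cauchy-Rayleigh distribution ECR(beta, lambda), for x > 0.\<close>
definition ecr_cdf :: "real \<Rightarrow> real \<Rightarrow> real \<Rightarrow> real" where
  "ecr_cdf \<beta> l x = (1 - l / sqrt (l\<^sup>2 + x\<^sup>2)) powr \<beta>"

definition lerch_phi :: "real \<Rightarrow> real \<Rightarrow> real \<Rightarrow> real" where
  "lerch_phi z s a = (\<Sum>n. z ^ n / (real n + a) powr s)"

end

theory Submission
  imports Defs
begin

lemma term_hasint:
  fixes a :: real assumes "a \<ge> 0"
  shows "((\<lambda>v. indicator {0<..<1} v * v powr a) has_integral (1/(a+1))) UNIV"
proof -
  have "((\<lambda>v. v powr a) has_integral (1 powr (a+1)/(a+1))) {0..1}"
    by (rule has_integral_powr_from_0) (use assms in auto)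
  hence "((\<lambda>v. v powr a) has_integral (1/(a+1))) {0..1}" by simp
  hence "((\<lambda>v. v powr a) has_integral (1/(a+1))) {0<..<1}"
    by (metis has_integral_Icc_iff_Ioo)
  hence "((\<lambda>v. if v \<in> {0<..<1} then v powr a else 0) has_integral (1/(a+1))) UNIV"
    by (subst has_integral_restrict_UNIV)
  moreover have "(\<lambda>v. if v \<in> {0<..<1} then v powr a else 0) = (\<lambda>v. indicator {0<..<1} v * v powr a)"
    by (auto simp: indicator_def)
  ultimately show ?thesis by simp
qed

lemma term_nn:
  fixes a :: real assumes "a \<ge> 0"
  shows "(\<integral>\<^sup>+ v. ennreal (indicator {0<..<1} v * v powr a) \<partial>lborel) = ennreal (1/(a+1))"
  by (rule nn_integral_has_integral_lborel[OF _ _ term_hasint[OF assms]]) (auto simp: indicator_def)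

lemma t_summable:
  fixes c b :: real assumes "0 \<le> c" "c \<le> 1" "b > 0"
  shows "summable (\<lambda>n. c^n * b / (real n * (real n + b)))"
proof (rule summable_comparison_test')
  show "summable (\<lambda>n. b * inverse (real n ^ 2))"
    by (intro summable_mult inverse_power_summable) auto
  fix n :: nat assume "n \<ge> 1"
  have "c^n \<le> 1" using assms by (simp add: power_le_one)
  have "c^n * b / (real n * (real n + b)) \<le> 1 * b / (real n * real n)"
    apply (rule frac_le) using assms \<open>c^n \<le> 1\<close> \<open>n \<ge> 1\<close> by (auto intro!: mult_right_mono mult_left_mono)
  thus "norm (c^n * b / (real n * (real n + b))) \<le> b * inverse (real n ^ 2)"
    using assms by (simp add: power2_eq_square field_simps)
qed

lemma w_bounds:
  fixes c b v :: real assumes "0 < c" "c \<le> 1" "b > 0" "v \<in> {0<..<1}"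
  shows "0 < c * v powr (1/b)" "c * v powr (1/b) < 1"
proof -
  have p: "v powr (1/b) < 1" "0 < v powr (1/b)" using assms by (auto simp add: powr01_less_one)
  thus "0 < c * v powr (1/b)" using assms by simp
  show "c * v powr (1/b) < 1"
    using mult_left_le_one_le[of "v powr (1/b)" c] assms p by linarith
qed

lemma pw_series:
  fixes c b v :: real assumes "0 < c" "c \<le> 1" "b > 0"
  shows "ennreal (indicator {0<..<1} v * - ln (1 - c * v powr (1/b)))
     = (\<Sum>n. ennreal (c^n / real n * (indicator {0<..<1} v * v powr (real n / b))))"
proof (cases "v \<in> {0<..<1}")
  case True
  define w where "w = c * v powr (1/b)"
  have "v powr (1/b) < 1" using True assms by (simp add: powr01_less_one)
  have w: "0 < w" "w < 1" unfolding w_def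
  proof -
    have "0 < v powr (1/b)" using True by simp
    thus "0 < c * v powr (1/b)" using assms by simp
    show "c * v powr (1/b) < 1" using \<open>v powr (1/b) < 1\<close> \<open>c \<le> 1\<close> \<open>0 < v powr (1/b)\<close>
      using mult_left_le_one_le[of "v powr (1/b)" c] assms(1) by linarith
  qed
  have "(\<lambda>n. - ((-(-w))^n) / of_nat n) sums ln (1 + (-w))"
    by (rule ln_series') (use w in auto)
  hence "(\<lambda>n. w^n / real n) sums (- ln (1 - w))"
    using sums_minus[of "\<lambda>n. - (w ^ n / real n)" "ln (1 - w)"] by simp
  moreover have "w^n / real n = c^n / real n * (indicator {0<..<1} v * v powr (real n / b))" for n
    using True by (simp add: w_def power_mult_distrib powr_power)
  ultimately have "(\<lambda>n. c^n / real n * (indicator {0<..<1} v * v powr (real n / b))) sums (- ln (1 - w))"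
    by simp
  hence "(\<lambda>n. ennreal (c^n / real n * (indicator {0<..<1} v * v powr (real n / b)))) sums ennreal (- ln (1 - w))"
    using True w assms by (subst sums_ennreal) auto
  thus ?thesis using True by (simp add: w_def sums_iff)
next
  case False
  thus ?thesis by simp
qed


lemma nn_log:
  fixes c b :: real assumes c: "0 < c" "c \<le> 1" and b: "b > 0"
  shows "(\<integral>\<^sup>+ v. ennreal (indicator {0<..<1} v * - ln (1 - c * v powr (1/b))) \<partial>lborel)
     = ennreal (\<Sum>n. c^n * b / (real n * (real n + b)))"
proof -
  have "(\<integral>\<^sup>+ v. ennreal (indicator {0<..<1} v * - ln (1 - c * v powr (1/b))) \<partial>lborel)
      = (\<integral>\<^sup>+ v. (\<Sum>n. ennreal (c^n / real n * (indicator {0<..<1} v * v powr (real n / b)))) \<partial>lborel)"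
    using pw_series[OF c b] by simp
  also have "\<dots> = (\<Sum>n. \<integral>\<^sup>+ v. ennreal (c^n / real n * (indicator {0<..<1} v * v powr (real n / b))) \<partial>lborel)"
    by (rule nn_integral_suminf) measurable
  also have "\<dots> = (\<Sum>n. ennreal (c^n * b / (real n * (real n + b))))"
  proof (rule suminf_cong)
    fix n :: nat
    have "(\<integral>\<^sup>+ v. ennreal (c^n / real n * (indicator {0<..<1} v * v powr (real n / b))) \<partial>lborel)
        = (\<integral>\<^sup>+ v. ennreal (c^n / real n) * ennreal (indicator {0<..<1} v * v powr (real n / b)) \<partial>lborel)"
      by (intro nn_integral_cong ennreal_mult) (use c in auto)
    also have "\<dots> = ennreal (c^n / real n) * (\<integral>\<^sup>+ v. ennreal (indicator {0<..<1} v * v powr (real n / b)) \<partial>lborel)"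
      by (rule nn_integral_cmult) measurable
    also have "\<dots> = ennreal (c^n / real n) * ennreal (1 / (real n / b + 1))"
      using b by (subst term_nn) auto
    also have "\<dots> = ennreal (c^n / real n * (1 / (real n / b + 1)))"
      using c b by (subst ennreal_mult) auto
    also have "c^n / real n * (1 / (real n / b + 1)) = c^n * b / (real n * (real n + b))"
      using b by (cases "n = 0") (auto simp: field_simps)
    finally show "(\<integral>\<^sup>+ v. ennreal (c^n / real n * (indicator {0<..<1} v * v powr (real n / b))) \<partial>lborel)
       = ennreal (c^n * b / (real n * (real n + b)))" .
  qed
  also have "\<dots> = ennreal (\<Sum>n. c^n * b / (real n * (real n + b)))"
    using c b by (intro suminf_ennreal2 t_summable) auto
  finally show ?thesis .
qed

lemma bochner_log:
  fixes c b :: real assumes c: "0 < c" "c \<le> 1" and b: "b > 0"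
  shows "has_bochner_integral lborel (\<lambda>v. indicator {0<..<1} v * - ln (1 - c * v powr (1/b)))
     (\<Sum>n. c^n * b / (real n * (real n + b)))"
proof (rule has_bochner_integral_nn_integral)
  show "(\<lambda>v. indicator {0<..<1} v * - ln (1 - c * v powr (1/b))) \<in> borel_measurable lborel"
    by measurable
  show "AE x in lborel. 0 \<le> indicator {0<..<1} x * - ln (1 - c * x powr (1/b))"
  proof (rule AE_I2)
    fix v :: real
    show "0 \<le> indicator {0<..<1} v * - ln (1 - c * v powr (1/b))"
    proof (cases "v \<in> {0<..<1}")
      case True
      have "0 < c * v powr (1/b)" "c * v powr (1/b) < 1" using w_bounds[OF c b, of v] True by auto
      hence "ln (1 - c * v powr (1/b)) \<le> 0" by (subst ln_le_zero_iff) auto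
      thus ?thesis using True by simp
    qed simp
  qed
  show "0 \<le> (\<Sum>n. c^n * b / (real n * (real n + b)))"
    using c b by (intro suminf_nonneg t_summable) auto
  show "(\<integral>\<^sup>+ v. ennreal (indicator {0<..<1} v * - ln (1 - c * v powr (1/b))) \<partial>lborel)
     = ennreal (\<Sum>n. c^n * b / (real n * (real n + b)))" by (rule nn_log[OF c b])
qed

lemma sum_digamma:
  fixes b :: real assumes b: "b > 0"
  shows "(\<Sum>n. b / (real n * (real n + b))) = Digamma (1 + b) + euler_mascheroni"
proof -
  have sm: "summable (\<lambda>n. 1^n * b / (real n * (real n + b)))" using b by (intro t_summable) auto
  have "(\<Sum>n. b / (real n * (real n + b))) = (\<Sum>n. b / (real (Suc n) * (real (Suc n) + b)))"
    using suminf_split_head[OF sm] by simp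
  also have "\<dots> = (\<Sum>k. inverse (of_nat (Suc k)) - inverse ((1 + b) + of_nat k))"
    using b by (intro suminf_cong) (auto simp: field_simps)
  also have "\<dots> = Digamma (1 + b) + euler_mascheroni" by (simp add: Digamma_def)
  finally show ?thesis .
qed

lemma bochner_lnv:
  "has_bochner_integral lborel (\<lambda>v::real. indicator {0<..<1} v * ln v) (-1)"
proof -
  have "has_bochner_integral lborel (\<lambda>v. indicator {0<..<1} v * - ln (1 - 1 * v powr (1/1)))
     (\<Sum>n. 1^n * 1 / (real n * (real n + 1)))" by (rule bochner_log) auto
  moreover have "(\<Sum>n. 1^n * 1 / (real n * (real n + 1))) = 1"
    using sum_digamma[of 1] by (simp add: eval_nat_numeral Digamma_plus1[of 1, simplified])
  moreover have "(\<lambda>v. indicator {0<..<1} v * - ln (1 - 1 * v powr (1/1))) = (\<lambda>v::real. indicator {0<..<1} v * - ln (1 - v))"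
    by (auto simp: indicator_def)
  ultimately have h: "has_bochner_integral lborel (\<lambda>v::real. indicator {0<..<1} v * - ln (1 - v)) 1" by simp
  have "has_bochner_integral lborel (\<lambda>x. (\<lambda>v::real. indicator {0<..<1} v * - ln (1 - v)) (1 + (-1) * x)) (1 /\<^sub>R \<bar>-1\<bar>)"
    using h lborel_has_bochner_integral_real_affine_iff[of "-1" "\<lambda>v::real. indicator {0<..<1} v * - ln (1 - v)" 1 1] by simp
  moreover have "(\<lambda>x. (\<lambda>v::real. indicator {0<..<1} v * - ln (1 - v)) (1 + (-1) * x)) = (\<lambda>v. - (indicator {0<..<1} v * ln v))"
    by (auto simp: indicator_def)
  ultimately have "has_bochner_integral lborel (\<lambda>v::real. - (indicator {0<..<1} v * ln v)) 1" by simp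
  from has_bochner_integral_minus[OF this] show ?thesis by simp
qed

lemma lerch_rel:
  fixes b :: real assumes b: "b > 0"
  shows "(\<Sum>n. (1/2)^n * b / (real n * (real n + b))) = ln 2 - lerch_phi (1/2) 1 b + 1/b"
proof -
  have "(\<lambda>n. - ((-(-(1/2::real)))^n) / of_nat n) sums ln (1 + (-(1/2)))"
    by (rule ln_series') auto
  hence "(\<lambda>n. - ((1/2::real)^n / real n)) sums (- ln 2)"
    by (simp add: ln_div)
  from sums_minus[OF this] have s1: "(\<lambda>n. (1/2::real)^n / real n) sums ln 2" by simp
  have "summable (\<lambda>n. (1/2::real)^n / (real n + b))"
  proof (rule summable_comparison_test')
    show "summable (\<lambda>n. (1/2::real)^n * (1/b))" by (intro summable_mult2 summable_geometric) auto
    fix n :: nat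
    have "(1/2::real)^n / (real n + b) \<le> (1/2)^n / b"
      by (rule frac_le) (use b in auto)
    thus "norm ((1/2::real)^n / (real n + b)) \<le> (1/2)^n * (1/b)"
      using b by simp
  qed
  hence s2: "(\<lambda>n. (1/2::real)^n / (real n + b)) sums lerch_phi (1/2) 1 b"
    using b unfolding lerch_phi_def by (simp add: summable_sums)
  have s3: "(\<lambda>n. if n = 0 then 1/b else 0) sums (1/b)"
    using sums_single[of 0 "\<lambda>_. 1/b"] by simp
  have "(\<lambda>n. (1/2::real)^n / real n - (1/2)^n / (real n + b) + (if n = 0 then 1/b else 0)) sums (ln 2 - lerch_phi (1/2) 1 b + 1/b)"
    by (intro sums_add sums_diff s1 s2 s3)
  moreover have "(1/2::real)^n / real n - (1/2)^n / (real n + b) + (if n = 0 then 1/b else 0) = (1/2)^n * b / (real n * (real n + b))" for n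
    using b by (cases "n = 0") (auto simp: diff_frac_eq algebra_simps)
  ultimately show ?thesis by (simp add: sums_iff)
qed


lemma sq_le_iff: "0 \<le> (a::real) \<Longrightarrow> 0 \<le> b \<Longrightarrow> a \<le> b \<longleftrightarrow> a^2 \<le> b^2"
  by simp

lemma pw_iff: "0 \<le> (a::real) \<Longrightarrow> 0 \<le> c \<Longrightarrow> 0 < b \<Longrightarrow> a \<le> c \<longleftrightarrow> a powr b \<le> c powr b"
  by (smt (verit) powr_less_mono2)

definition Qf :: "real \<Rightarrow> real \<Rightarrow> real \<Rightarrow> real" where
  "Qf b l v = l * sqrt (v powr (1/b) * (2 - v powr (1/b))) / (1 - v powr (1/b))"

lemma Qf_meas[measurable]: "Qf b l \<in> borel_measurable borel"
  unfolding Qf_def by measurable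

lemma Qf_le:
  fixes b l v x :: real
  assumes b: "b > 0" and l: "l > 0" and v: "v \<in> {0<..<1}" and x: "x > 0"
  shows "Qf b l v \<le> x \<longleftrightarrow> v \<le> ecr_cdf b l x"
proof -
  define w where "w = v powr (1/b)"
  have w: "0 < w" "w < 1" using w_bounds[of 1 b v] b v by (auto simp: w_def)
  define s where "s = sqrt (l^2 + x^2)"
  have s: "s > 0" "s^2 = l^2 + x^2" using l x by (auto simp: s_def add_pos_pos)
  have "Qf b l v \<le> x \<longleftrightarrow> l * sqrt (w * (2 - w)) \<le> x * (1 - w)"
    unfolding Qf_def w_def[symmetric] using w by (simp add: divide_le_eq)
  also have "\<dots> \<longleftrightarrow> (l * sqrt (w * (2 - w)))^2 \<le> (x * (1 - w))^2"
    using w l x by (intro sq_le_iff) auto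
  also have "(l * sqrt (w * (2 - w)))^2 = l^2 * (w * (2 - w))"
    using w by (simp add: power_mult_distrib)
  also have "l^2 * (w * (2 - w)) \<le> (x * (1 - w))^2 \<longleftrightarrow> l^2 \<le> s^2 * (1 - w)^2"
    unfolding s(2) by (simp add: power2_eq_square algebra_simps)
  also have "\<dots> \<longleftrightarrow> l \<le> s * (1 - w)"
    using w l s by (subst sq_le_iff[of l]) (auto simp: power_mult_distrib)
  also have "\<dots> \<longleftrightarrow> w \<le> 1 - l / s"
    using s by (simp add: field_simps)
  also have "\<dots> \<longleftrightarrow> w powr b \<le> (1 - l / s) powr b"
  proof (rule pw_iff)
    have "l < s" unfolding s_def using l x
      by (simp add: real_less_rsqrt)
    thus "0 \<le> 1 - l / s" using s l by simp
  qed (use w b in auto)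
  also have "w powr b = v" using v b by (simp add: w_def powr_powr)
  finally show ?thesis unfolding ecr_cdf_def s_def .
qed


lemma Qf_pos:
  assumes b: "b > 0" and l: "l > 0" and v: "v \<in> {0<..<1}"
  shows "Qf b l v > 0"
proof -
  have w: "0 < v powr (1/b)" "v powr (1/b) < 1" using w_bounds[of 1 b v] b v by auto
  thus ?thesis unfolding Qf_def using l by (auto intro!: divide_pos_pos mult_pos_pos)
qed

lemma lnQ:
  assumes b: "b > 0" and l: "l > 0" and v: "v \<in> {0<..<1}"
  shows "ln (Qf b l v) = ln l + (1/(2*b)) * ln v + ln 2 / 2
     - (1/2) * (- ln (1 - (1/2) * v powr (1/b))) + (- ln (1 - 1 * v powr (1/b)))"
proof -
  define w where "w = v powr (1/b)"
  have w: "0 < w" "w < 1" using w_bounds[of 1 b v] b v by (auto simp: w_def)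
  have "ln (Qf b l v) = ln l + ln (sqrt (w * (2 - w))) - ln (1 - w)"
    unfolding Qf_def w_def[symmetric] using w l by (simp add: ln_div ln_mult)
  also have "ln (sqrt (w * (2 - w))) = (ln w + ln (2 - w)) / 2"
    using w by (simp add: ln_sqrt ln_mult)
  also have "ln w = (1/b) * ln v" using v by (simp add: w_def ln_powr)
  also have "ln (2 - w) = ln 2 + ln (1 - (1/2) * w)"
  proof -
    have "ln (2 * (1 - (1/2) * w)) = ln 2 + ln (1 - (1/2) * w)" by (subst ln_mult) (use w in auto)
    moreover have "2 * (1 - (1/2) * w) = 2 - w" by simp
    ultimately show ?thesis by simp
  qed
  finally show ?thesis unfolding w_def using b by (simp add: field_simps)
qed

lemma integral_lnQ:
  assumes b: "b > 0" and l: "l > 0"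
  shows "has_bochner_integral lborel (\<lambda>v. indicator {0<..<1} v * ln (Qf b l v))
    (ln l + lerch_phi (1/2) 1 b / 2 + Digamma (1 + b) + euler_mascheroni - 1 / b)"
proof -
  have I: "has_bochner_integral lborel (indicator {0<..<1::real} :: real \<Rightarrow> real) 1"
    using has_bochner_integral_real_indicator[of "{0<..<1::real}" lborel] by simp
  have h: "has_bochner_integral lborel (\<lambda>v. ln l * indicator {0<..<1} v + (1/(2*b)) * (indicator {0<..<1} v * ln v)
      + (ln 2 / 2) * indicator {0<..<1} v
      - (1/2) * (indicator {0<..<1} v * - ln (1 - (1/2) * v powr (1/b)))
      + indicator {0<..<1} v * - ln (1 - 1 * v powr (1/b)))
     (ln l * 1 + (1/(2*b)) * (-1) + (ln 2 / 2) * 1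
       - (1/2) * (\<Sum>n. (1/2)^n * b / (real n * (real n + b)))
       + (\<Sum>n. 1^n * b / (real n * (real n + b))))"
    using b
    by (intro has_bochner_integral_add has_bochner_integral_diff has_bochner_integral_mult_right
          I bochner_lnv bochner_log) auto
  have eq: "ln l * 1 + (1/(2*b)) * (-1) + (ln 2 / 2) * 1
       - (1/2) * (\<Sum>n. (1/2)^n * b / (real n * (real n + b)))
       + (\<Sum>n. 1^n * b / (real n * (real n + b)))
     = ln l + lerch_phi (1/2) 1 b / 2 + Digamma (1 + b) + euler_mascheroni - 1 / b"
  proof -
    have e2: "(\<Sum>n. 1^n * b / (real n * (real n + b))) = Digamma (1 + b) + euler_mascheroni"
      using sum_digamma[OF b] by simp
    show ?thesis unfolding e2 lerch_rel[OF b] using b by (simp add: field_simps)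
  qed
  show ?thesis
    apply (subst has_bochner_integral_cong[OF refl _ eq[symmetric]])
    prefer 2 apply (rule h)
    using lnQ[OF b l] by (auto simp: indicator_def algebra_simps)
qed


theorem proposition6:
  fixes M :: "'a measure" and X :: "'a \<Rightarrow> real" and \<beta> l :: real
  assumes "prob_space M"
    and "X \<in> borel_measurable M"
    and "\<beta> > 0" and "l > 0"
    and "\<And>x. measure M {\<omega> \<in> space M. X \<omega> \<le> x} = (if x > 0 then ecr_cdf \<beta> l x else 0)"
  shows "integrable M (\<lambda>\<omega>. ln (X \<omega>))
    \<and> (\<integral>\<omega>. ln (X \<omega>) \<partial>M) = ln l + lerch_phi (1/2) 1 \<beta> / 2 + Digamma (1 + \<beta>) + euler_mascheroni - 1 / \<beta>"
proof -
  interpret P: prob_space M by fact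
  note Xm[measurable] = assms(2)
  have b: "\<beta> > 0" and l: "l > 0" by fact+
  define U where "U = density lborel (\<lambda>v. ennreal (indicator {0<..<1::real} v))"
  have sU[simp, measurable_cong]: "sets U = sets borel" unfolding U_def by simp
  have spU: "space U = UNIV" unfolding U_def by simp
  have emU: "emeasure U A = emeasure lborel ({0<..<1} \<inter> A)" if A: "A \<in> sets borel" for A
  proof -
    have "emeasure U A = (\<integral>\<^sup>+ x. ennreal (indicator {0<..<1::real} x) * indicator A x \<partial>lborel)"
      unfolding U_def using A by (subst emeasure_density) auto
    also have "\<dots> = (\<integral>\<^sup>+ x. indicator ({0<..<1} \<inter> A) x \<partial>lborel)"
      by (intro nn_integral_cong) (auto simp: indicator_def)
    also have "\<dots> = emeasure lborel ({0<..<1} \<inter> A)"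
      using A by (subst nn_integral_indicator) auto
    finally show ?thesis .
  qed
  have pU: "prob_space U"
    by (rule prob_spaceI) (simp add: emU spU)
  have Qm[measurable]: "Qf \<beta> l \<in> borel_measurable U"
    using measurable_cong_sets[OF sU refl] Qf_meas by blast
  define D1 where "D1 = distr M borel X"
  define D2 where "D2 = distr U borel (Qf \<beta> l)"
  have rd1: "real_distribution D1" unfolding D1_def by (intro P.real_distribution_distr) simp
  have rd2: "real_distribution D2" unfolding D2_def by (intro prob_space.real_distribution_distr pU) simp
  have "cdf D1 = cdf D2"
  proof
    fix x :: real
    have "cdf D1 x = measure M (X -` {..x} \<inter> space M)"
      unfolding cdf_def D1_def by (subst measure_distr) auto
    also have "X -` {..x} \<inter> space M = {\<omega> \<in> space M. X \<omega> \<le> x}" by auto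
    also have "measure M \<dots> = (if x > 0 then ecr_cdf \<beta> l x else 0)" by (rule assms(5))
    finally have c1: "cdf D1 x = (if x > 0 then ecr_cdf \<beta> l x else 0)" .
    have "cdf D2 x = measure U (Qf \<beta> l -` {..x} \<inter> space U)"
      unfolding cdf_def D2_def by (subst measure_distr) auto
    also have "\<dots> = measure lborel ({0<..<1} \<inter> (Qf \<beta> l -` {..x}))"
    proof -
      have "Qf \<beta> l -` {..x} \<in> sets borel"
        using measurable_sets_borel[OF Qf_meas, of "{..x}"] by simp
      thus ?thesis unfolding measure_def spU by (subst emU) auto
    qed
    also have "\<dots> = (if x > 0 then ecr_cdf \<beta> l x else 0)"
    proof (cases "x > 0")
      case True
      define g where "g = 1 - l / sqrt (l^2 + x^2)"
      have "l < sqrt (l^2 + x^2)" using l True by (simp add: real_less_rsqrt)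
      moreover have "0 < sqrt (l^2 + x^2)" using l by (simp add: add_pos_nonneg)
      ultimately have g: "0 < g" "g < 1" using l unfolding g_def by (auto simp: divide_less_eq)
      have G: "0 < ecr_cdf \<beta> l x" "ecr_cdf \<beta> l x < 1"
        unfolding ecr_cdf_def g_def[symmetric] using g b by (auto simp: powr01_less_one)
      have "{0<..<1} \<inter> (Qf \<beta> l -` {..x}) = {0<..ecr_cdf \<beta> l x}"
        using Qf_le[OF b l _ True] G by auto
      thus ?thesis using True G by simp
    next
      case False
      have "{0<..<1} \<inter> (Qf \<beta> l -` {..x}) = {}"
        using Qf_pos[OF b l] False by force
      thus ?thesis using False by simp
    qed
    finally show "cdf D1 x = cdf D2 x" using c1 by simp
  qed
  hence D: "D1 = D2" using cdf_unique rd1 rd2 by blast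
  have H: "has_bochner_integral lborel (\<lambda>v. indicator {0<..<1} v * ln (Qf \<beta> l v))
    (ln l + lerch_phi (1/2) 1 \<beta> / 2 + Digamma (1 + \<beta>) + euler_mascheroni - 1 / \<beta>)"
    by (rule integral_lnQ[OF b l])
  have int1: "integrable M (\<lambda>\<omega>. ln (X \<omega>)) \<longleftrightarrow> integrable U (\<lambda>v. ln (Qf \<beta> l v))"
  proof -
    have "integrable M (\<lambda>\<omega>. ln (X \<omega>)) \<longleftrightarrow> integrable D1 ln"
      unfolding D1_def by (subst integrable_distr_eq) auto
    also have "\<dots> \<longleftrightarrow> integrable D2 ln" using D by simp
    also have "\<dots> \<longleftrightarrow> integrable U (\<lambda>v. ln (Qf \<beta> l v))"
      unfolding D2_def by (subst integrable_distr_eq) auto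
    finally show ?thesis .
  qed
  have int2: "(\<integral>\<omega>. ln (X \<omega>) \<partial>M) = (\<integral>v. ln (Qf \<beta> l v) \<partial>U)"
  proof -
    have "(\<integral>\<omega>. ln (X \<omega>) \<partial>M) = integral\<^sup>L D1 ln"
      unfolding D1_def by (subst integral_distr) auto
    also have "\<dots> = integral\<^sup>L D2 ln" using D by simp
    also have "\<dots> = (\<integral>v. ln (Qf \<beta> l v) \<partial>U)"
      unfolding D2_def by (subst integral_distr) auto
    finally show ?thesis .
  qed
  have "integrable U (\<lambda>v. ln (Qf \<beta> l v))"
    unfolding U_def using H by (subst integrable_density) (auto simp: has_bochner_integral_iff)
  moreover have "(\<integral>v. ln (Qf \<beta> l v) \<partial>U)
      = ln l + lerch_phi (1/2) 1 \<beta> / 2 + Digamma (1 + \<beta>) + euler_mascheroni - 1 / \<beta>"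
    unfolding U_def using H by (subst integral_density) (auto simp: has_bochner_integral_iff)
  ultimately show ?thesis using int1 int2 by simp
qed

end
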